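(* For every boosted instance $I=(G,t,t^* )$ and every boost action $B=(q,\tau)$ with $\tau\ge t^*_q$, $\mathrm{Loss}(I,B)\le\tau$.
   Context: $G=(V,E,c)$ is an undirected graph with edge costs $c\ge0$; $\delta(S)$ denotes the edges with exactly one endpoint in $S$. Shadow moat growing on $(G,s)$, for $s:V\to\mathbb{R}_{\ge0}$: continuous process in time $\tau\ge0$ maintaining a forest (initially empty), its components, and $y_S\ge0$ (initially $0$); at time $\tau$ a component $C$ is active iff some $w\in C$ has $s_w>\tau$, and each active $C$ increases $y_C$ at rate $1$; an edge $e$ between different components with $\sum_{S:e\in\delta(S)}y_S=c_e$ is added and the components merge (ties processed by a fixed rule); stop when nothing is active. A boosted instance is $I=(G,t,t^* )$ with $t,t^*:V\to\mathbb{R}_{\ge0}$ and $t^*_v\ge t_v$ for all $v$. Run shadow moat growing on $(G,t^* )$; at each moment $\tau$, each active component $C$ contributes its growth to $y_{\mathrm{base}}$ if some $w\in C$ has $t_w>\tau$, and to $y_{\mathrm{add}}$ otherwise. A boost action $B=(q,\tau)$ with $\tau\ge t^*_q$ yields $\mathrm{WithBoost}(I,B)=(G,t,t^{*\prime})$ with $t^{*\prime}_q=\tau$ and $t^{*\prime}_v=t^*_v$ otherwise. With $(y_{\mathrm{base}},y_{\mathrm{add}})$ for $I$ and $(y'_{\mathrm{base}},y'_{\mathrm{add}})$ for $\mathrm{WithBoost}(I,B)$: $\mathrm{Win}(I,B)=y_{\mathrm{base}}-y'_{\mathrm{base}}$, $\mathrm{Loss}(I,B)=y'_{\mathrm{add}}-y_{\mathrm{add}}$.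 *)

theory Defs
  imports Complex_Main
begin

text \<open>Shadow moat growing on (G,s); in addition a second threshold function t is used
  to classify the growth of an active component C at time tau as "base" (some w in C
  with t w > tau) or "add" (otherwise).  Ties are processed one edge at a time by a
  fixed selection rule pick, applied to the set of currently tight edges.\<close>

definition comp :: "'a set \<Rightarrow> 'a set set \<Rightarrow> 'a \<Rightarrow> 'a set" where
  "comp V F v = {w \<in> V. (\<lambda>a b. {a, b} \<in> F)\<^sup>*\<^sup>* v w}"

definition comps :: "'a set \<Rightarrow> 'a set set \<Rightarrow> 'a set set" where
  "comps V F = comp V F ` V"

definition in_delta :: "'a set \<Rightarrow> 'a set \<Rightarrow> bool" where
  "in_delta e S \<longleftrightarrow> card (e \<inter> S) = 1"

definition crossing :: "'a set \<Rightarrow> 'a set set \<Rightarrow> 'a set \<Rightarrow> bool" where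
  "crossing V F e \<longleftrightarrow> (\<exists>C\<in>comps V F. in_delta e C)"

definition load :: "'a set \<Rightarrow> ('a set \<Rightarrow> real) \<Rightarrow> 'a set \<Rightarrow> real" where
  "load V y e = (\<Sum>S\<in>Pow V. if in_delta e S then y S else 0)"

definition active :: "('a \<Rightarrow> real) \<Rightarrow> real \<Rightarrow> 'a set \<Rightarrow> bool" where
  "active s tau C \<longleftrightarrow> (\<exists>w\<in>C. s w > tau)"

definition tight_edges ::
  "'a set \<Rightarrow> 'a set set \<Rightarrow> ('a set \<Rightarrow> real) \<Rightarrow> 'a set set \<Rightarrow> ('a set \<Rightarrow> real) \<Rightarrow> 'a set set" where
  "tight_edges V E c F y = {e \<in> E. crossing V F e \<and> load V y e = c e}"

definition grow_rate :: "'a set \<Rightarrow> ('a \<Rightarrow> real) \<Rightarrow> 'a set set \<Rightarrow> real \<Rightarrow> 'a set \<Rightarrow> nat" where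
  "grow_rate V s F tau e = card {C \<in> comps V F. active s tau C \<and> in_delta e C}"

text \<open>candidate lengths until the next event (an activity change, a base/add change,
  or a crossing edge becoming tight)\<close>
definition events ::
  "'a set \<Rightarrow> 'a set set \<Rightarrow> ('a set \<Rightarrow> real) \<Rightarrow> ('a \<Rightarrow> real) \<Rightarrow> ('a \<Rightarrow> real)
    \<Rightarrow> 'a set set \<Rightarrow> real \<Rightarrow> ('a set \<Rightarrow> real) \<Rightarrow> real set" where
  "events V E c s t F tau y =
     {s w - tau | w. w \<in> V \<and> s w > tau}
   \<union> {t w - tau | w. w \<in> V \<and> t w > tau}
   \<union> {(c e - load V y e) / real (grow_rate V s F tau e) | e.
        e \<in> E \<and> crossing V F e \<and> grow_rate V s F tau e > 0}"

type_synonym 'a mstate = "'a set set \<times> real \<times> ('a set \<Rightarrow> real) \<times> real \<times> real"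
  \<comment> \<open>(forest, time, y, total base growth, total add growth)\<close>

inductive moat_step ::
  "'a set \<Rightarrow> 'a set set \<Rightarrow> ('a set \<Rightarrow> real) \<Rightarrow> ('a \<Rightarrow> real) \<Rightarrow> ('a \<Rightarrow> real)
    \<Rightarrow> ('a set set \<Rightarrow> 'a set) \<Rightarrow> 'a mstate \<Rightarrow> 'a mstate \<Rightarrow> bool"
  for V E c s t pick where
  merge: "tight_edges V E c F y \<noteq> {} \<Longrightarrow>
    moat_step V E c s t pick (F, tau, y, yb, ya)
      (insert (pick (tight_edges V E c F y)) F, tau, y, yb, ya)"
| grow: "tight_edges V E c F y = {} \<Longrightarrow> (\<exists>w\<in>V. s w > tau) \<Longrightarrow>
    d = Min (events V E c s t F tau y) \<Longrightarrow>
    moat_step V E c s t pick (F, tau, y, yb, ya)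
      (F, tau + d,
       (\<lambda>S. if S \<in> comps V F \<and> active s tau S then y S + d else y S),
       yb + d * real (card {C \<in> comps V F. active s tau C \<and> active t tau C}),
       ya + d * real (card {C \<in> comps V F. active s tau C \<and> \<not> active t tau C}))"

definition moat_final ::
  "'a set \<Rightarrow> 'a set set \<Rightarrow> ('a set \<Rightarrow> real) \<Rightarrow> ('a \<Rightarrow> real) \<Rightarrow> 'a mstate \<Rightarrow> bool" where
  "moat_final V E c s st = (case st of (F, tau, y, yb, ya) \<Rightarrow>
     tight_edges V E c F y = {} \<and> \<not> (\<exists>w\<in>V. s w > tau))"

definition moat_outcome ::
  "'a set \<Rightarrow> 'a set set \<Rightarrow> ('a set \<Rightarrow> real) \<Rightarrow> ('a \<Rightarrow> real) \<Rightarrow> ('a \<Rightarrow> real)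
    \<Rightarrow> ('a set set \<Rightarrow> 'a set) \<Rightarrow> real \<Rightarrow> real \<Rightarrow> bool" where
  "moat_outcome V E c s t pick yb ya \<longleftrightarrow>
     (\<exists>F tau y. (moat_step V E c s t pick)\<^sup>*\<^sup>* ({}, 0, (\<lambda>_. 0), 0, 0) (F, tau, y, yb, ya)
        \<and> moat_final V E c s (F, tau, y, yb, ya))"

end

theory Submission
  imports Defs
begin



definition rel :: "'a set set \<Rightarrow> 'a \<Rightarrow> 'a \<Rightarrow> bool" where
  "rel F = (\<lambda>a b. {a, b} \<in> F)\<^sup>*\<^sup>*"

lemma rel_refl[simp]: "rel F u u" by (simp add: rel_def)

lemma rel_sym: "rel F u v \<Longrightarrow> rel F v u"
  unfolding rel_def
proof (induction rule: rtranclp_induct)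
  case (step y z)
  have "{z,y} \<in> F" using step(2) by (simp add: insert_commute)
  then show ?case using step(3) by (rule converse_rtranclp_into_rtranclp[where r="\<lambda>a b. {a, b} \<in> F"])
qed simp

lemma rel_trans: "rel F u v \<Longrightarrow> rel F v w \<Longrightarrow> rel F u w"
  unfolding rel_def by (rule rtranclp_trans)

lemma rel_edge: "{a,b} \<in> F \<Longrightarrow> rel F a b"
  unfolding rel_def by auto

lemma rel_mono: "F \<subseteq> G \<Longrightarrow> rel F u v \<Longrightarrow> rel G u v"
  unfolding rel_def by (erule rtranclp_mono[THEN predicate2D, rotated]) auto

lemma rel_into: assumes "\<And>x y. {x,y} \<in> F \<Longrightarrow> rel G x y" and "rel F u v" shows "rel G u v"
  using assms(2) unfolding rel_def[of F]
  by (induction rule: rtranclp_induct) (auto intro: rel_trans assms(1))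

lemma comp_rel: "comp V F u = {w \<in> V. rel F u w}" by (simp add: comp_def rel_def)

lemma in_comp_self: "u \<in> V \<Longrightarrow> u \<in> comp V F u" by (simp add: comp_rel)

lemma comp_eqI: "rel F u v \<Longrightarrow> comp V F u = comp V F v"
  unfolding comp_rel by (metis rel_sym rel_trans)

lemma comps_member: "C \<in> comps V F \<Longrightarrow> x \<in> C \<Longrightarrow> C = comp V F x"
proof -
  assume "C \<in> comps V F" "x \<in> C"
  then obtain u where u: "u \<in> V" "C = comp V F u" unfolding comps_def by blast
  then have "rel F u x" using \<open>x \<in> C\<close> by (simp add: comp_rel)
  then show ?thesis using u comp_eqI by metis
qed

lemma comps_sub: "C \<in> comps V F \<Longrightarrow> C \<subseteq> V"
  unfolding comps_def comp_rel by blast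

lemma comps_Pow: "comps V F \<subseteq> Pow V" using comps_sub by blast

lemma comp_in_comps: "u \<in> V \<Longrightarrow> comp V F u \<in> comps V F" by (simp add: comps_def)

lemma comp_mono: "(\<And>u v. rel F u v \<Longrightarrow> rel G u v) \<Longrightarrow> comp V F u \<subseteq> comp V G u"
  by (auto simp: comp_rel)

lemma in_comp_iff: "v \<in> comp V F u \<longleftrightarrow> v \<in> V \<and> rel F u v" by (simp add: comp_rel)

lemma in_delta_pair: assumes "a \<noteq> b" shows "in_delta {a,b} C \<longleftrightarrow> (a \<in> C) \<noteq> (b \<in> C)"
proof -
  have "{a,b} \<inter> C = (if a \<in> C then {a} else {}) \<union> (if b \<in> C then {b} else {})" by auto
  then show ?thesis using assms by (auto simp: in_delta_def)
qed

lemma crossing_iff: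
  assumes "a \<in> V" "b \<in> V" "a \<noteq> b"
  shows "crossing V F {a,b} \<longleftrightarrow> \<not> rel F a b"
proof
  assume "crossing V F {a,b}"
  then obtain C where C: "C \<in> comps V F" "in_delta {a,b} C" by (auto simp: crossing_def)
  then obtain x where x: "x \<in> V" "C = comp V F x" by (auto simp: comps_def)
  show "\<not> rel F a b"
  proof
    assume r: "rel F a b"
    have "(a \<in> C) = (b \<in> C)" using r assms x
      by (auto simp: in_comp_iff intro: rel_trans rel_sym)
    then show False using C(2) in_delta_pair[OF assms(3)] by simp
  qed
next
  assume "\<not> rel F a b"
  then have "a \<in> comp V F a" "b \<notin> comp V F a" using assms by (auto simp: in_comp_iff)
  then show "crossing V F {a,b}" using assms
    by (auto simp: crossing_def in_delta_pair intro!: bexI[of _ "comp V F a"] comp_in_comps)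
qed

lemma grow_rate_sep:
  assumes "a \<in> V" "b \<in> V" "a \<noteq> b" "\<not> rel F a b"
  shows "grow_rate V s F th {a,b} =
    (if active s th (comp V F a) then 1 else 0) + (if active s th (comp V F b) then 1 else 0)"
proof -
  have ne: "comp V F a \<noteq> comp V F b"
    using assms in_comp_self[OF assms(1), of F] by (auto simp: in_comp_iff)
  have "{C \<in> comps V F. active s th C \<and> in_delta {a,b} C} =
     (if active s th (comp V F a) then {comp V F a} else {}) \<union> (if active s th (comp V F b) then {comp V F b} else {})"
  proof (intro equalityI subsetI)
    fix C assume "C \<in> {C \<in> comps V F. active s th C \<and> in_delta {a,b} C}"
    then have C: "C \<in> comps V F" "active s th C" "(a \<in> C) \<noteq> (b \<in> C)"
      using in_delta_pair[OF assms(3)] by auto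
    then show "C \<in> (if active s th (comp V F a) then {comp V F a} else {}) \<union> (if active s th (comp V F b) then {comp V F b} else {})"
      using comps_member[OF C(1)] by (cases "a \<in> C") auto
  next
    fix C assume "C \<in> (if active s th (comp V F a) then {comp V F a} else {}) \<union> (if active s th (comp V F b) then {comp V F b} else {})"
    then show "C \<in> {C \<in> comps V F. active s th C \<and> in_delta {a,b} C}"
      using assms by (auto split: if_splits simp: comp_in_comps in_delta_pair in_comp_iff intro: rel_sym)
  qed
  then show ?thesis unfolding grow_rate_def using ne by auto
qed

lemma load_cont:
  assumes "finite V"
  shows "load V (\<lambda>S. if S \<in> comps V F \<and> active s th S then y S + d else y S) e
     = load V y e + d * real (grow_rate V s F th e)"
proof -
  have "load V (\<lambda>S. if S \<in> comps V F \<and> active s th S then y S + d else y S) e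
     = (\<Sum>S\<in>Pow V. (if in_delta e S then y S else 0) + (if in_delta e S \<and> S \<in> comps V F \<and> active s th S then d else 0))"
    unfolding load_def by (rule sum.cong) auto
  also have "\<dots> = load V y e + (\<Sum>S\<in>{S\<in>Pow V. in_delta e S \<and> S \<in> comps V F \<and> active s th S}. d)"
    unfolding load_def sum.distrib using assms by (simp add: sum.inter_filter[symmetric])
  also have "{S\<in>Pow V. in_delta e S \<and> S \<in> comps V F \<and> active s th S} = {C \<in> comps V F. active s th C \<and> in_delta e C}"
    using comps_Pow by auto
  finally show ?thesis by (simp add: grow_rate_def)
qed




abbreviation stF :: "'a mstate \<Rightarrow> 'a set set" where "stF X \<equiv> fst X"
abbreviation stT :: "'a mstate \<Rightarrow> real" where "stT X \<equiv> fst (snd X)"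
abbreviation stY :: "'a mstate \<Rightarrow> 'a set \<Rightarrow> real" where "stY X \<equiv> fst (snd (snd X))"
abbreviation stYB :: "'a mstate \<Rightarrow> real" where "stYB X \<equiv> fst (snd (snd (snd X)))"
abbreviation stYA :: "'a mstate \<Rightarrow> real" where "stYA X \<equiv> snd (snd (snd (snd X)))"

locale ctx =
  fixes V :: "'a set" and E :: "'a set set" and c :: "'a set \<Rightarrow> real" and t :: "'a \<Rightarrow> real"
    and pick :: "'a set set \<Rightarrow> 'a set"
  assumes finV: "finite V" and Eok: "\<forall>e\<in>E. e \<subseteq> V \<and> card e = 2" and cpos: "\<forall>e\<in>E. c e \<ge> 0"
    and pickok: "\<forall>X. X \<noteq> {} \<and> X \<subseteq> E \<longrightarrow> pick X \<in> X"
begin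

definition ready :: "'a mstate \<Rightarrow> bool" where
  "ready X \<longleftrightarrow> tight_edges V E c (stF X) (stY X) = {}"
definition good :: "'a mstate \<Rightarrow> bool" where
  "good X \<longleftrightarrow> (\<forall>e\<in>E. crossing V (stF X) e \<longrightarrow> load V (stY X) e \<le> c e)"
definition nonfin :: "('a \<Rightarrow> real) \<Rightarrow> 'a mstate \<Rightarrow> bool" where
  "nonfin s X \<longleftrightarrow> (\<exists>w\<in>V. s w > stT X)"
definition evs :: "('a \<Rightarrow> real) \<Rightarrow> 'a mstate \<Rightarrow> real set" where
  "evs s X = events V E c s t (stF X) (stT X) (stY X)"
definition dmin :: "('a \<Rightarrow> real) \<Rightarrow> 'a mstate \<Rightarrow> real" where
  "dmin s X = Min (evs s X)"
definition cont :: "('a \<Rightarrow> real) \<Rightarrow> 'a mstate \<Rightarrow> real \<Rightarrow> 'a mstate" where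
  "cont s X d = (stF X, stT X + d,
     (\<lambda>S. if S \<in> comps V (stF X) \<and> active s (stT X) S then stY X S + d else stY X S),
     stYB X + d * real (card {C \<in> comps V (stF X). active s (stT X) C \<and> active t (stT X) C}),
     stYA X + d * real (card {C \<in> comps V (stF X). active s (stT X) C \<and> \<not> active t (stT X) C}))"
definition mstep :: "'a mstate \<Rightarrow> 'a mstate \<Rightarrow> bool" where
  "mstep X Y \<longleftrightarrow> tight_edges V E c (stF X) (stY X) \<noteq> {} \<and>
     Y = (insert (pick (tight_edges V E c (stF X) (stY X))) (stF X), snd X)"

abbreviation step where "step s \<equiv> moat_step V E c s t pick"

lemma step_cases:
  assumes "step s X Y"
  shows "mstep X Y \<or> (ready X \<and> nonfin s X \<and> Y = cont s X (dmin s X))"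
  using assms
proof (cases rule: moat_step.cases)
  case (merge F y tau yb ya)
  then show ?thesis by (simp add: mstep_def)
next
  case (grow F y tau d yb ya)
  then show ?thesis by (clarsimp simp add: ready_def nonfin_def cont_def dmin_def evs_def cong: if_cong)
qed

lemma step_grow:
  assumes "ready X" "nonfin s X"
  shows "step s X (cont s X (dmin s X))"
proof -
  obtain F tau y yb ya where X: "X = (F, tau, y, yb, ya)" by (cases X) auto
  show ?thesis using assms unfolding X cont_def dmin_def evs_def ready_def nonfin_def
    by (simp add: moat_step.grow cong: if_cong)
qed

lemma final_iff: "moat_final V E c s X \<longleftrightarrow> ready X \<and> \<not> nonfin s X"
  by (cases X) (simp add: moat_final_def ready_def nonfin_def)

lemma final_noStep: "moat_final V E c s X \<Longrightarrow> \<not> step s X Y"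
  using step_cases[of s X Y] by (auto simp: final_iff mstep_def ready_def)

lemma final_pow: "(step s ^^ n) X Y \<Longrightarrow> moat_final V E c s X \<Longrightarrow> n = 0 \<and> Y = X"
proof (cases n)
  case (Suc m)
  assume a: "(step s ^^ n) X Y" "moat_final V E c s X"
  then obtain Z where "step s X Z" using Suc by (metis relpowp_Suc_E2)
  then show ?thesis using a(2) final_noStep by blast
qed simp

lemma finE: "finite E"
proof -
  have "E \<subseteq> Pow V" using Eok by auto
  then show ?thesis using finV finite_subset by blast
qed

lemma edgeE: assumes "e \<in> E" obtains a b where "e = {a,b}" "a \<noteq> b" "a \<in> V" "b \<in> V"
  using Eok assms by (auto simp: card_2_iff)

lemma finite_evs: "finite (evs s X)"
proof -
  have 1: "finite {s w - stT X | w. w \<in> V \<and> s w > stT X}" using finV by (intro finite_image_set) auto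
  have 2: "finite {t w - stT X | w. w \<in> V \<and> t w > stT X}" using finV by (intro finite_image_set) auto
  have 3: "finite {(c e - load V (stY X) e) / real (grow_rate V s (stF X) (stT X) e) | e.
        e \<in> E \<and> crossing V (stF X) e \<and> grow_rate V s (stF X) (stT X) e > 0}"
    using finE by (intro finite_image_set) auto
  show ?thesis unfolding evs_def events_def using 1 2 3 by blast
qed

lemma ev1: "w \<in> V \<Longrightarrow> s w > stT X \<Longrightarrow> s w - stT X \<in> evs s X"
  unfolding evs_def events_def by blast
lemma ev2: "w \<in> V \<Longrightarrow> t w > stT X \<Longrightarrow> t w - stT X \<in> evs s X"
  unfolding evs_def events_def by blast
lemma ev3: "e \<in> E \<Longrightarrow> crossing V (stF X) e \<Longrightarrow> grow_rate V s (stF X) (stT X) e > 0 \<Longrightarrow>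
   (c e - load V (stY X) e) / real (grow_rate V s (stF X) (stT X) e) \<in> evs s X"
  unfolding evs_def events_def by blast

lemma evs_nonempty: "nonfin s X \<Longrightarrow> evs s X \<noteq> {}"
  using ev1 unfolding nonfin_def by blast

lemma dmin_le: "x \<in> evs s X \<Longrightarrow> dmin s X \<le> x"
  unfolding dmin_def using finite_evs by simp

lemma evs_pos:
  assumes "ready X" "good X" "x \<in> evs s X" shows "x > 0"
  using assms(3) unfolding evs_def events_def
proof (elim UnE CollectE exE conjE)
  fix e assume e: "x = (c e - load V (stY X) e) / real (grow_rate V s (stF X) (stT X) e)" "e \<in> E"
    "crossing V (stF X) e" "0 < grow_rate V s (stF X) (stT X) e"
  have "load V (stY X) e \<le> c e" using assms(2) e by (auto simp: good_def)
  moreover have "load V (stY X) e \<noteq> c e" using assms(1) e by (auto simp: ready_def tight_edges_def)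
  ultimately show ?thesis using e by simp
qed auto

lemma dmin_pos: "ready X \<Longrightarrow> good X \<Longrightarrow> nonfin s X \<Longrightarrow> dmin s X > 0"
  unfolding dmin_def using finite_evs evs_nonempty evs_pos by (metis Min_in)

end



context ctx begin

lemma cont_simps[simp]:
  "stF (cont s X d) = stF X" "stT (cont s X d) = stT X + d"
  "stYA (cont s X d) = stYA X + d * real (card {C \<in> comps V (stF X). active s (stT X) C \<and> \<not> active t (stT X) C})"
  by (simp_all add: cont_def)

lemma load_cont': "load V (stY (cont s X d)) e = load V (stY X) e + d * real (grow_rate V s (stF X) (stT X) e)"
  unfolding cont_def using load_cont[OF finV] by simp

lemma active_eq: "(\<forall>w\<in>V. (f w > a \<longleftrightarrow> f w > b)) \<Longrightarrow> C \<in> comps V F \<Longrightarrow> active f a C = active f b C"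
  unfolding active_def using comps_sub by blast

lemma rate_pos_nonfin: "grow_rate V s (stF X) (stT X) e > 0 \<Longrightarrow> nonfin s X"
proof -
  assume "grow_rate V s (stF X) (stT X) e > 0"
  then have "{C \<in> comps V (stF X). active s (stT X) C \<and> in_delta e C} \<noteq> {}"
    unfolding grow_rate_def by (metis card.empty less_irrefl)
  then obtain C where "C \<in> comps V (stF X)" "active s (stT X) C" by blast
  then show ?thesis using comps_sub unfolding nonfin_def active_def by blast
qed

lemma window_s: "ready X \<Longrightarrow> good X \<Longrightarrow> nonfin s X \<Longrightarrow> 0 \<le> r \<Longrightarrow> r < dmin s X \<Longrightarrow>
   \<forall>w\<in>V. (s w > stT X + r \<longleftrightarrow> s w > stT X)"
proof (intro ballI iffI)
  fix w assume "w \<in> V" "s w > stT X"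
  moreover assume "0 \<le> r" "r < dmin s X"
  ultimately show "s w > stT X + r" using ev1[of w X s] dmin_le[of "s w - stT X" s X] by linarith
qed auto

lemma window_t: "ready X \<Longrightarrow> good X \<Longrightarrow> nonfin s X \<Longrightarrow> 0 \<le> r \<Longrightarrow> r < dmin s X \<Longrightarrow>
   \<forall>w\<in>V. (t w > stT X + r \<longleftrightarrow> t w > stT X)"
proof (intro ballI iffI)
  fix w assume "w \<in> V" "t w > stT X"
  moreover assume "0 \<le> r" "r < dmin s X"
  ultimately show "t w > stT X + r" using ev2[of w X s] dmin_le[of "t w - stT X" s X] by linarith
qed auto

lemma cont_good:
  assumes "ready X" "good X" "0 \<le> r" "nonfin s X \<Longrightarrow> r \<le> dmin s X"
  shows "good (cont s X r)"
  unfolding good_def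
proof (intro ballI impI)
  fix e assume e: "e \<in> E" "crossing V (stF (cont s X r)) e"
  then have cr: "crossing V (stF X) e" by simp
  have le: "load V (stY X) e \<le> c e" using assms(2) e cr by (simp add: good_def)
  show "load V (stY (cont s X r)) e \<le> c e"
  proof (cases "grow_rate V s (stF X) (stT X) e > 0")
    case True
    have nf: "nonfin s X" using rate_pos_nonfin[OF True] .
    have "r \<le> (c e - load V (stY X) e) / real (grow_rate V s (stF X) (stT X) e)"
      using assms(4)[OF nf] dmin_le[OF ev3[OF e(1) cr True]] by linarith
    then have "r * real (grow_rate V s (stF X) (stT X) e) \<le> c e - load V (stY X) e"
      using True by (simp add: le_divide_eq)
    then show ?thesis by (simp add: load_cont')
  next
    case False
    then show ?thesis using le by (simp add: load_cont')
  qed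
qed

lemma cont_ready:
  assumes "ready X" "good X" "0 \<le> r" "nonfin s X \<Longrightarrow> r < dmin s X"
  shows "ready (cont s X r)"
  unfolding ready_def tight_edges_def
proof (intro equalityI subsetI)
  fix e assume "e \<in> {e \<in> E. crossing V (stF (cont s X r)) e \<and> load V (stY (cont s X r)) e = c e}"
  then have e: "e \<in> E" "crossing V (stF X) e" "load V (stY (cont s X r)) e = c e" by auto
  have ne: "load V (stY X) e \<noteq> c e" using assms(1) e by (auto simp: ready_def tight_edges_def)
  show "e \<in> {}"
  proof (cases "grow_rate V s (stF X) (stT X) e > 0")
    case True
    have nf: "nonfin s X" using rate_pos_nonfin[OF True] .
    have "r < (c e - load V (stY X) e) / real (grow_rate V s (stF X) (stT X) e)"
      using assms(4)[OF nf] dmin_le[OF ev3[OF e(1) e(2) True]] by linarith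
    then have "r * real (grow_rate V s (stF X) (stT X) e) < c e - load V (stY X) e"
      using True by (simp add: less_divide_eq)
    then show ?thesis using e(3) by (simp add: load_cont')
  next
    case False
    then show ?thesis using ne e(3) by (simp add: load_cont')
  qed
qed simp

lemma cont_fin:
  assumes "\<not> nonfin s X" "0 \<le> r"
  shows "stY (cont s X r) = stY X" "stYA (cont s X r) = stYA X" "\<not> nonfin s (cont s X r)"
proof -
  have na: "\<And>C. C \<in> comps V (stF X) \<Longrightarrow> \<not> active s (stT X) C"
    using assms(1) comps_sub unfolding nonfin_def active_def by blast
  show "stY (cont s X r) = stY X" unfolding cont_def using na by (intro ext) auto
  have "{C \<in> comps V (stF X). active s (stT X) C \<and> \<not> active t (stT X) C} = {}" (is "?S = {}") using na by blast
  then have "card ?S = 0" by (metis card.empty)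
  then show "stYA (cont s X r) = stYA X" by (simp only: cont_simps)
  show "\<not> nonfin s (cont s X r)" using assms unfolding nonfin_def by auto
qed

end



context ctx begin

lemma cont_comp:
  assumes X: "ready X" "good X" "nonfin s X" and r: "0 \<le> r" "r < dmin s X"
  shows "nonfin s (cont s X r)" "dmin s (cont s X r) = dmin s X - r"
    "cont s (cont s X r) (dmin s X - r) = cont s X (dmin s X)"
    "step s (cont s X r) (cont s X (dmin s X))"
proof -
  define X1 where "X1 = cont s X r"
  note ws = window_s[OF X r] and wt = window_t[OF X r]
  have act_s: "\<And>C. C \<in> comps V (stF X) \<Longrightarrow> active s (stT X + r) C = active s (stT X) C"
    using active_eq[OF ws] .
  have act_t: "\<And>C. C \<in> comps V (stF X) \<Longrightarrow> active t (stT X + r) C = active t (stT X) C"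
    using active_eq[OF wt] .
  have rate_eq: "\<And>e. grow_rate V s (stF X) (stT X + r) e = grow_rate V s (stF X) (stT X) e"
    unfolding grow_rate_def using act_s by (metis (no_types, lifting) Collect_cong)
  show nf: "nonfin s (cont s X r)" using X(3) ws unfolding nonfin_def by auto
  have e1: "{s w - stT X1 | w. w \<in> V \<and> s w > stT X1} = (\<lambda>x. x - r) ` {s w - stT X | w. w \<in> V \<and> s w > stT X}"
    using ws unfolding X1_def by (auto simp: image_iff)
  have e2: "{t w - stT X1 | w. w \<in> V \<and> t w > stT X1} = (\<lambda>x. x - r) ` {t w - stT X | w. w \<in> V \<and> t w > stT X}"
    using wt unfolding X1_def by (auto simp: image_iff)
  have key: "\<And>e. e \<in> E \<Longrightarrow> crossing V (stF X) e \<Longrightarrow> grow_rate V s (stF X) (stT X) e > 0 \<Longrightarrow>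
     (c e - load V (stY X1) e) / real (grow_rate V s (stF X1) (stT X1) e) =
     (c e - load V (stY X) e) / real (grow_rate V s (stF X) (stT X) e) - r"
    unfolding X1_def by (simp add: load_cont' rate_eq diff_divide_distrib add_divide_distrib)
  have e3: "{(c e - load V (stY X1) e) / real (grow_rate V s (stF X1) (stT X1) e) | e.
        e \<in> E \<and> crossing V (stF X1) e \<and> grow_rate V s (stF X1) (stT X1) e > 0}
      = (\<lambda>x. x - r) ` {(c e - load V (stY X) e) / real (grow_rate V s (stF X) (stT X) e) | e.
        e \<in> E \<and> crossing V (stF X) e \<and> grow_rate V s (stF X) (stT X) e > 0}"
  proof (intro equalityI subsetI)
    fix x assume "x \<in> {(c e - load V (stY X1) e) / real (grow_rate V s (stF X1) (stT X1) e) | e.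
        e \<in> E \<and> crossing V (stF X1) e \<and> grow_rate V s (stF X1) (stT X1) e > 0}"
    then obtain e where e: "x = (c e - load V (stY X1) e) / real (grow_rate V s (stF X1) (stT X1) e)"
      "e \<in> E" "crossing V (stF X) e" "grow_rate V s (stF X) (stT X) e > 0"
      unfolding X1_def by (auto simp: rate_eq)
    then show "x \<in> (\<lambda>x. x - r) ` {(c e - load V (stY X) e) / real (grow_rate V s (stF X) (stT X) e) | e.
        e \<in> E \<and> crossing V (stF X) e \<and> grow_rate V s (stF X) (stT X) e > 0}"
      using key[OF e(2-4)] by blast
  next
    fix x assume "x \<in> (\<lambda>x. x - r) ` {(c e - load V (stY X) e) / real (grow_rate V s (stF X) (stT X) e) | e.
        e \<in> E \<and> crossing V (stF X) e \<and> grow_rate V s (stF X) (stT X) e > 0}"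
    then obtain e where e: "x = (c e - load V (stY X) e) / real (grow_rate V s (stF X) (stT X) e) - r"
      "e \<in> E" "crossing V (stF X) e" "grow_rate V s (stF X) (stT X) e > 0"
      by blast
    have "crossing V (stF X1) e" "grow_rate V s (stF X1) (stT X1) e > 0"
      using e unfolding X1_def by (auto simp: rate_eq)
    then show "x \<in> {(c e - load V (stY X1) e) / real (grow_rate V s (stF X1) (stT X1) e) | e.
        e \<in> E \<and> crossing V (stF X1) e \<and> grow_rate V s (stF X1) (stT X1) e > 0}"
      unfolding mem_Collect_eq using key[OF e(2-4)] e(1) e(2) by (intro exI[of _ e]) simp
  qed
  have evs_eq: "evs s X1 = (\<lambda>x. x - r) ` evs s X"
    unfolding evs_def events_def image_Un using e1 e2 e3 by simp
  have mono: "mono (\<lambda>x::real. x - r)" by (auto simp: mono_def)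
  show dm: "dmin s (cont s X r) = dmin s X - r"
    unfolding X1_def[symmetric] dmin_def evs_eq
    using mono_Min_commute[OF mono finite_evs evs_nonempty[OF X(3)]] by simp
  have s1: "{C \<in> comps V (stF X). active s (stT X + r) C \<and> active t (stT X + r) C}
     = {C \<in> comps V (stF X). active s (stT X) C \<and> active t (stT X) C}" using act_s act_t by blast
  have s2: "{C \<in> comps V (stF X). active s (stT X + r) C \<and> \<not> active t (stT X + r) C}
     = {C \<in> comps V (stF X). active s (stT X) C \<and> \<not> active t (stT X) C}" using act_s act_t by blast
  have yeq: "(\<lambda>S. if S \<in> comps V (stF X) \<and> active s (stT X + r) S
        then (if S \<in> comps V (stF X) \<and> active s (stT X) S then stY X S + r else stY X S) + (dmin s X - r)
        else (if S \<in> comps V (stF X) \<and> active s (stT X) S then stY X S + r else stY X S))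
     = (\<lambda>S. if S \<in> comps V (stF X) \<and> active s (stT X) S then stY X S + dmin s X else stY X S)"
    using act_s by (intro ext) auto
  show cc: "cont s (cont s X r) (dmin s X - r) = cont s X (dmin s X)"
    unfolding cont_def[of s "cont s X r"]
    apply (simp only: cont_simps)
    apply (simp add: s1 s2 cong: if_cong)
    apply (unfold cont_def)
    apply (simp add: yeq cong: if_cong)
    apply (simp add: algebra_simps)
    apply (rule ext)
    using act_s by (auto simp: add.commute)
  have rd: "ready (cont s X r)" using cont_ready[OF X(1,2) r(1)] r(2) by blast
  show "step s (cont s X r) (cont s X (dmin s X))"
    using step_grow[OF rd nf] by (simp add: dm cc)
qed

end



context ctx begin

lemma crossing_anti: assumes "e \<in> E" "F \<subseteq> G" "crossing V G e" shows "crossing V F e"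
proof -
  obtain a b where ab: "e = {a,b}" "a \<noteq> b" "a \<in> V" "b \<in> V" using edgeE[OF assms(1)] by metis
  have "\<not> rel G a b" using assms(3) crossing_iff[OF ab(3,4,2)] ab(1) by simp
  then have "\<not> rel F a b" using rel_mono[OF assms(2)] by blast
  then show ?thesis using crossing_iff[OF ab(3,4,2)] ab(1) by simp
qed

lemma mstep_props:
  assumes "mstep X Y"
  shows "snd Y = snd X" "stF X \<subseteq> stF Y"
    "\<forall>e \<in> stF Y - stF X. e \<in> E \<and> load V (stY X) e = c e"
proof -
  let ?T = "tight_edges V E c (stF X) (stY X)"
  have ne: "?T \<noteq> {}" and Y: "Y = (insert (pick ?T) (stF X), snd X)" using assms by (auto simp: mstep_def)
  have "?T \<subseteq> E" by (auto simp: tight_edges_def)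
  then have "pick ?T \<in> ?T" using pickok ne by blast
  then have "pick ?T \<in> E \<and> load V (stY X) (pick ?T) = c (pick ?T)" by (auto simp: tight_edges_def)
  then show "snd Y = snd X" "stF X \<subseteq> stF Y" "\<forall>e \<in> stF Y - stF X. e \<in> E \<and> load V (stY X) e = c e"
    using Y by auto
qed

lemma msteps_props:
  assumes "mstep\<^sup>*\<^sup>* X Y"
  shows "snd Y = snd X \<and> stF X \<subseteq> stF Y \<and> (\<forall>e \<in> stF Y - stF X. e \<in> E \<and> load V (stY X) e = c e)"
  using assms
proof (induction rule: rtranclp_induct)
  case (step Y Z)
  note p = mstep_props[OF step(2)]
  show ?case using step(3) p by auto
qed simp

lemma msteps_good: "mstep\<^sup>*\<^sup>* X Y \<Longrightarrow> good X \<Longrightarrow> good Y"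
proof -
  assume a: "mstep\<^sup>*\<^sup>* X Y" "good X"
  note p = msteps_props[OF a(1)]
  show "good Y" unfolding good_def
  proof (intro ballI impI)
    fix e assume "e \<in> E" "crossing V (stF Y) e"
    then have "crossing V (stF X) e" using crossing_anti p by blast
    then show "load V (stY Y) e \<le> c e" using a(2) \<open>e \<in> E\<close> p by (simp add: good_def)
  qed
qed

lemma chain_to_ready:
  "(step s ^^ n) Z FZ \<Longrightarrow> moat_final V E c s FZ \<Longrightarrow>
   \<exists>Z' m. mstep\<^sup>*\<^sup>* Z Z' \<and> ready Z' \<and> (step s ^^ m) Z' FZ \<and> m \<le> n"
proof (induction n arbitrary: Z)
  case 0
  then have "Z = FZ" by simp
  then have "ready Z" using 0(2) by (simp add: final_iff)
  then show ?case using 0(1) by (intro exI[of _ Z] exI[of _ 0]) simp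
next
  case (Suc n)
  show ?case
  proof (cases "ready Z")
    case True
    then show ?thesis using Suc.prems(1) by (intro exI[of _ Z] exI[of _ "Suc n"]) simp
  next
    case False
    from Suc.prems(1) obtain Z1 where z1: "step s Z Z1" "(step s ^^ n) Z1 FZ" by (metis relpowp_Suc_E2)
    have m1: "mstep Z Z1" using step_cases[OF z1(1)] False by blast
    obtain Z' m where z': "mstep\<^sup>*\<^sup>* Z1 Z'" "ready Z'" "(step s ^^ m) Z' FZ" "m \<le> n"
      using Suc.IH[OF z1(2) Suc.prems(2)] by blast
    have "mstep\<^sup>*\<^sup>* Z Z'" using m1 z'(1) by (rule converse_rtranclp_into_rtranclp)
    then show ?thesis using z' by (intro exI[of _ Z'] exI[of _ m]) simp
  qed
qed

end



context ctx begin

lemma step_det: "ready X \<Longrightarrow> step s X Z \<Longrightarrow> Z = cont s X (dmin s X)"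
  using step_cases[of s X Z] by (auto simp: mstep_def ready_def)

lemma advance:
  assumes X: "ready X" "good X" and ch: "(step s ^^ n) X FX" "moat_final V E c s FX"
    and r: "0 \<le> r" "nonfin s X \<Longrightarrow> r \<le> dmin s X"
  shows "\<exists>X2 m FX'. mstep\<^sup>*\<^sup>* (cont s X r) X2 \<and> ready X2 \<and> (step s ^^ m) X2 FX' \<and>
     moat_final V E c s FX' \<and> stYA FX' = stYA FX \<and> m \<le> n \<and> (nonfin s X \<and> r = dmin s X \<longrightarrow> m < n)"
proof (cases "nonfin s X")
  case False
  then have fin: "moat_final V E c s X" using X(1) by (simp add: final_iff)
  have n0: "n = 0" "FX = X" using final_pow[OF ch(1) fin] by auto
  have rd: "ready (cont s X r)" using cont_ready[OF X r(1)] False by blast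
  have "moat_final V E c s (cont s X r)" using rd cont_fin(3)[OF False r(1)] by (simp add: final_iff)
  moreover have "stYA (cont s X r) = stYA FX" using cont_fin(2)[OF False r(1)] n0 by simp
  ultimately show ?thesis using rd False n0
    by (intro exI[of _ "cont s X r"] exI[of _ 0] exI[of _ "cont s X r"]) simp
next
  case True
  have notfin: "\<not> moat_final V E c s X" using True by (simp add: final_iff)
  obtain n' where n': "n = Suc n'" using ch notfin by (cases n) auto
  obtain Z where z: "step s X Z" "(step s ^^ n') Z FX" using ch(1) n' by (metis relpowp_Suc_E2)
  have Zeq: "Z = cont s X (dmin s X)" using step_det[OF X(1) z(1)] .
  show ?thesis
  proof (cases "r < dmin s X")
    case True
    note cc = cont_comp[OF X \<open>nonfin s X\<close> r(1) True]
    have rd: "ready (cont s X r)" using cont_ready[OF X r(1)] True by blast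
    have "(step s ^^ n) (cont s X r) FX" using cc(4) z(2) Zeq n' by (metis relpowp_Suc_I2)
    then show ?thesis using rd ch(2) True
      by (intro exI[of _ "cont s X r"] exI[of _ n] exI[of _ FX]) simp
  next
    case False
    then have req: "r = dmin s X" using r(2) \<open>nonfin s X\<close> by simp
    obtain X2 m where x2: "mstep\<^sup>*\<^sup>* Z X2" "ready X2" "(step s ^^ m) X2 FX" "m \<le> n'"
      using chain_to_ready[OF z(2) ch(2)] by blast
    show ?thesis using x2 ch(2) n' req Zeq
      by (intro exI[of _ X2] exI[of _ m] exI[of _ FX]) simp
  qed
qed

end



locale cmp = ctx V E c t pick for V :: "'a set" and E c t pick +
  fixes ts :: "'a \<Rightarrow> real" and q :: 'a and tau :: real
  assumes qV: "q \<in> V" and tsq: "ts q \<le> tau" and tnn: "\<forall>v\<in>V. 0 \<le> t v \<and> t v \<le> ts v"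
begin

abbreviation s' where "s' \<equiv> ts(q := tau)"

lemma tau_nn: "0 \<le> tau" using tnn qV tsq by force

lemma s_le: "ts w \<le> s' w" using tsq by simp

lemma finite_comps: "finite (comps V F)" unfolding comps_def using finV by simp

lemma count_le:
  assumes I1: "\<And>u v. rel F u v \<Longrightarrow> rel F' u v"
  shows "card {C' \<in> comps V F'. active s' th C' \<and> \<not> active t th C'}
     \<le> card {C \<in> comps V F. active ts th C \<and> \<not> active t th C} + (if th < tau then 1 else 0)"
proof -
  define S' where "S' = {C' \<in> comps V F'. active s' th C' \<and> \<not> active t th C'}"
  define S where "S = {C \<in> comps V F. active ts th C \<and> \<not> active t th C}"
  define S1 where "S1 = {C' \<in> S'. \<exists>w\<in>C'. ts w > th}"
  define S2 where "S2 = S' - S1"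
  have S2sub: "S2 \<subseteq> (if th < tau then {comp V F' q} else {})"
  proof
    fix C' assume "C' \<in> S2"
    then have C': "C' \<in> comps V F'" "active s' th C'" "\<forall>w\<in>C'. \<not> ts w > th"
      unfolding S2_def S1_def S'_def by auto
    then obtain w where w: "w \<in> C'" "s' w > th" unfolding active_def by blast
    have "w = q" using w C'(3) by (cases "w = q") auto
    then have "th < tau" "C' = comp V F' q" using w comps_member[OF C'(1) w(1)] by auto
    then show "C' \<in> (if th < tau then {comp V F' q} else {})" by simp
  qed
  have c2: "card S2 \<le> (if th < tau then 1 else 0)"
    using card_mono[OF _ S2sub] by (cases "th < tau") auto
  define f where "f C' = comp V F (SOME w. w \<in> C' \<and> ts w > th)" for C'
  have fprops: "f C' \<in> S \<and> f C' \<subseteq> C' \<and> (SOME w. w \<in> C' \<and> ts w > th) \<in> f C'" if aC: "C' \<in> S1" for C'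
  proof -
    have C': "C' \<in> comps V F'" "\<not> active t th C'" "\<exists>w. w \<in> C' \<and> ts w > th"
      using aC unfolding S1_def S'_def by auto
    define w where "w = (SOME w. w \<in> C' \<and> ts w > th)"
    have w: "w \<in> C'" "ts w > th" unfolding w_def using someI_ex[OF C'(3)] by auto
    have wV: "w \<in> V" using comps_sub[OF C'(1)] w(1) by blast
    have sub: "comp V F w \<subseteq> C'" using comp_mono[OF I1] comps_member[OF C'(1) w(1)] by blast
    have win: "w \<in> comp V F w" using in_comp_self[OF wV] .
    have "comp V F w \<in> S" unfolding S_def using comp_in_comps[OF wV] w(2) win sub C'(2)
      unfolding active_def by blast
    then show ?thesis unfolding f_def w_def[symmetric] using sub win by blast
  qed
  have inj: "inj_on f S1"
  proof (rule inj_onI)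
    fix C1 C2 assume a: "C1 \<in> S1" "C2 \<in> S1" "f C1 = f C2"
    define w where "w = (SOME w. w \<in> C1 \<and> ts w > th)"
    have "w \<in> C1" "w \<in> C2" using fprops[OF a(1)] fprops[OF a(2)] a(3) unfolding w_def by auto
    moreover have "C1 \<in> comps V F'" "C2 \<in> comps V F'" using a unfolding S1_def S'_def by auto
    ultimately show "C1 = C2" using comps_member by metis
  qed
  have finS: "finite S" unfolding S_def using finite_comps by simp
  have c1: "card S1 \<le> card S"
    using card_inj_on_le[OF inj _ finS] fprops by blast
  have "S' = S1 \<union> S2" unfolding S2_def S1_def by blast
  then have "card S' \<le> card S1 + card S2" by (simp add: card_Un_le)
  then show ?thesis using c1 c2 unfolding S'_def[symmetric] S_def[symmetric] by linarith
qed

lemma rate_le: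
  assumes I1: "\<And>u v. rel F u v \<Longrightarrow> rel F' u v" and e: "e \<in> E" "crossing V F' e"
  shows "grow_rate V ts F th e \<le> grow_rate V s' F' th e"
proof -
  obtain a b where ab: "e = {a,b}" "a \<noteq> b" "a \<in> V" "b \<in> V" using edgeE[OF e(1)] by metis
  have nr': "\<not> rel F' a b" using e(2) crossing_iff[OF ab(3,4,2)] ab(1) by simp
  then have nr: "\<not> rel F a b" using I1 by blast
  have mon: "active s' th (comp V F' x)" if ax: "active ts th (comp V F x)" for x
  proof -
    obtain w where "w \<in> comp V F x" "ts w > th" using ax unfolding active_def by blast
    moreover have "comp V F x \<subseteq> comp V F' x" using comp_mono[OF I1] .
    ultimately have "w \<in> comp V F' x" "th < s' w" using s_le[of w] by (blast, linarith)
    then show ?thesis unfolding active_def by (rule bexI[rotated])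
  qed
  show ?thesis unfolding ab(1) grow_rate_sep[OF ab(3,4,2) nr] grow_rate_sep[OF ab(3,4,2) nr']
    using mon[of a] mon[of b] by (auto split: if_splits)
qed

end



context cmp begin

definition inv :: "'a mstate \<Rightarrow> 'a mstate \<Rightarrow> bool" where
  "inv A B \<longleftrightarrow> stT A = stT B \<and> (\<forall>u v. rel (stF A) u v \<longrightarrow> rel (stF B) u v) \<and>
     (\<forall>e\<in>E. crossing V (stF B) e \<longrightarrow> load V (stY A) e \<le> load V (stY B) e) \<and>
     stYA B - stYA A \<le> min (stT A) tau \<and> good A \<and> good B"

lemma merge_phase:
  assumes pre: "inv A1 B1" and mA: "mstep\<^sup>*\<^sup>* A1 A2" and mB: "mstep\<^sup>*\<^sup>* B1 B2" and rB: "ready B2"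
  shows "inv A2 B2"
proof -
  note pA = msteps_props[OF mA] and pB = msteps_props[OF mB]
  have I1: "\<And>u v. rel (stF A1) u v \<Longrightarrow> rel (stF B1) u v" using pre by (simp add: inv_def)
  have I2: "\<And>e. e \<in> E \<Longrightarrow> crossing V (stF B1) e \<Longrightarrow> load V (stY A1) e \<le> load V (stY B1) e"
    using pre by (simp add: inv_def)
  have gA: "good A1" and gB: "good B1" using pre by (auto simp: inv_def)
  have sA: "snd A2 = snd A1" using pA by (rule conjunct1)
  have sB: "snd B2 = snd B1" using pB by (rule conjunct1)
  have fB: "stF B1 \<subseteq> stF B2" using pB by blast
  have yB: "stY B2 = stY B1" using sB by simp
  have yA: "stY A2 = stY A1" using sA by simp
  have edge: "rel (stF B2) x y" if xy: "{x,y} \<in> stF A2" for x y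
  proof (cases "{x,y} \<in> stF A1")
    case True
    then show ?thesis using I1[OF rel_edge[OF True]] rel_mono[OF fB] by blast
  next
    case False
    then have e: "{x,y} \<in> E" "load V (stY A1) {x,y} = c {x,y}" using pA xy by auto
    obtain a b where ab: "{x,y} = {a,b}" "a \<noteq> b" "a \<in> V" "b \<in> V" using edgeE[OF e(1)] by metis
    have xyV: "x \<noteq> y" "x \<in> V" "y \<in> V" using ab by (auto simp: doubleton_eq_iff)
    show ?thesis
    proof (cases "rel (stF B1) x y")
      case True
      then show ?thesis using rel_mono[OF fB] by blast
    next
      case False
      then have cr: "crossing V (stF B1) {x,y}" using crossing_iff[OF xyV(2,3,1)] by simp
      have "load V (stY B1) {x,y} \<le> c {x,y}" using gB cr e(1) by (simp add: good_def)
      moreover have "c {x,y} \<le> load V (stY B1) {x,y}" using I2[OF e(1) cr] e(2) by simp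
      ultimately have eq: "load V (stY B2) {x,y} = c {x,y}" using yB by simp
      show ?thesis
      proof (rule ccontr)
        assume "\<not> rel (stF B2) x y"
        then have "crossing V (stF B2) {x,y}" using crossing_iff[OF xyV(2,3,1)] by simp
        then have "{x,y} \<in> tight_edges V E c (stF B2) (stY B2)" using e(1) eq by (simp add: tight_edges_def)
        then show False using rB by (simp add: ready_def)
      qed
    qed
  qed
  have P1: "\<forall>u v. rel (stF A2) u v \<longrightarrow> rel (stF B2) u v" using rel_into[OF edge] by blast
  have P2: "\<forall>e\<in>E. crossing V (stF B2) e \<longrightarrow> load V (stY A2) e \<le> load V (stY B2) e"
  proof (intro ballI impI)
    fix e assume "e \<in> E" "crossing V (stF B2) e"
    then have "crossing V (stF B1) e" using crossing_anti[OF _ fB] by blast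
    then show "load V (stY A2) e \<le> load V (stY B2) e" using I2 \<open>e \<in> E\<close> yA yB by simp
  qed
  have same: "stT A2 = stT A1" "stT B2 = stT B1" "stYA A2 = stYA A1" "stYA B2 = stYA B1"
    using sA sB by simp_all
  show ?thesis unfolding inv_def using P1 P2 same pre msteps_good[OF mA gA] msteps_good[OF mB gB]
    by (simp add: inv_def)
qed

lemma pre_step:
  assumes I: "inv A B" and rA: "ready A" and rB: "ready B" and r: "0 \<le> r"
    and dA: "nonfin ts A \<Longrightarrow> r \<le> dmin ts A" and dB: "nonfin s' B \<Longrightarrow> r \<le> dmin s' B"
  shows "inv (cont ts A r) (cont s' B r)"
proof -
  have T: "stT A = stT B" and I1: "\<And>u v. rel (stF A) u v \<Longrightarrow> rel (stF B) u v"
    and I2: "\<And>e. e \<in> E \<Longrightarrow> crossing V (stF B) e \<Longrightarrow> load V (stY A) e \<le> load V (stY B) e"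
    and I3: "stYA B - stYA A \<le> min (stT A) tau" and gA: "good A" and gB: "good B"
    using I by (auto simp: inv_def)
  define th where "th = stT A"
  have P2: "\<forall>e\<in>E. crossing V (stF (cont s' B r)) e \<longrightarrow> load V (stY (cont ts A r)) e \<le> load V (stY (cont s' B r)) e"
  proof (intro ballI impI)
    fix e assume e: "e \<in> E" "crossing V (stF (cont s' B r)) e"
    then have cr: "crossing V (stF B) e" by simp
    have "grow_rate V ts (stF A) th e \<le> grow_rate V s' (stF B) th e" using rate_le[OF I1 e(1) cr] .
    then have "r * real (grow_rate V ts (stF A) th e) \<le> r * real (grow_rate V s' (stF B) th e)"
      using r by (intro mult_left_mono) auto
    then show "load V (stY (cont ts A r)) e \<le> load V (stY (cont s' B r)) e"
      using I2[OF e(1) cr] T unfolding th_def by (simp add: load_cont')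
  qed
  define kA where "kA = card {C \<in> comps V (stF A). active ts th C \<and> \<not> active t th C}"
  define kB where "kB = card {C \<in> comps V (stF B). active s' th C \<and> \<not> active t th C}"
  have k: "real kB \<le> real kA + (if th < tau then 1 else 0)"
    using count_le[where F="stF A" and F'="stF B" and th=th, OF I1] unfolding kA_def kB_def by (cases "th < tau") auto
  have ya1: "stYA (cont ts A r) = stYA A + r * real kA" unfolding kA_def th_def by (simp only: cont_simps)
  have ya2: "stYA (cont s' B r) = stYA B + r * real kB" unfolding kB_def th_def T by (simp only: cont_simps)
  have P3: "stYA (cont s' B r) - stYA (cont ts A r) \<le> min (stT (cont ts A r)) tau"
  proof (cases "th < tau")
    case True
    have nf: "nonfin s' B" unfolding nonfin_def using True qV T unfolding th_def by (intro bexI[of _ q]) simp_all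
    have "s' q - stT B \<in> evs s' B" using ev1[OF qV, of B s'] True T unfolding th_def by simp
    then have "r \<le> tau - th" using dB[OF nf] dmin_le[of "s' q - stT B" s' B] T unfolding th_def by simp
    moreover have "r * real kB \<le> r * real kA + r"
      using mult_left_mono[OF _ r, of "real kB" "real kA + 1"] k True by (simp add: distrib_left)
    moreover have "min (stT A) tau = stT A" "min (stT A + r) tau = stT A + r"
      using True \<open>r \<le> tau - th\<close> unfolding th_def by auto
    ultimately show ?thesis unfolding ya1 ya2 cont_simps(2) using I3 unfolding th_def by linarith
  next
    case False
    have "r * real kB \<le> r * real kA" using mult_left_mono[OF _ r, of "real kB" "real kA"] k False by simp
    moreover have "min (stT A) tau = tau" "min (stT A + r) tau = tau"
      using False r unfolding th_def by auto
    ultimately show ?thesis unfolding ya1 ya2 cont_simps(2) using I3 by linarith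
  qed
  have gA': "good (cont ts A r)" using cont_good[OF rA gA r dA] .
  have gB': "good (cont s' B r)" using cont_good[OF rB gB r dB] .
  show ?thesis unfolding inv_def using T I1 P2 P3 gA' gB' by simp
qed

end



context cmp begin

lemma main:
  "nA + nB = N \<Longrightarrow> inv A B \<Longrightarrow> ready A \<Longrightarrow> ready B \<Longrightarrow>
   (step ts ^^ nA) A FA \<Longrightarrow> moat_final V E c ts FA \<Longrightarrow>
   (step s' ^^ nB) B FB \<Longrightarrow> moat_final V E c s' FB \<Longrightarrow> stYA FB - stYA FA \<le> tau"
proof (induction N arbitrary: A B FA FB nA nB rule: less_induct)
  case (less N)
  have gA: "good A" and gB: "good B" and I3: "stYA B - stYA A \<le> min (stT A) tau"
    using less.prems(2) by (auto simp: inv_def)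
  show ?case
  proof (cases "nonfin ts A \<or> nonfin s' B")
    case False
    then have fA: "moat_final V E c ts A" and fB: "moat_final V E c s' B"
      using less.prems(3,4) by (auto simp: final_iff)
    have "FA = A" using final_pow[OF less.prems(5) fA] by simp
    moreover have "FB = B" using final_pow[OF less.prems(7) fB] by simp
    ultimately show ?thesis using I3 min.cobounded2[of "stT A" tau] by simp
  next
    case True
    define r where "r = (if nonfin ts A \<and> nonfin s' B then min (dmin ts A) (dmin s' B)
       else if nonfin ts A then dmin ts A else dmin s' B)"
    have pA: "nonfin ts A \<Longrightarrow> dmin ts A > 0" using dmin_pos[OF less.prems(3) gA] .
    have pB: "nonfin s' B \<Longrightarrow> dmin s' B > 0" using dmin_pos[OF less.prems(4) gB] .
    have r0: "0 \<le> r" unfolding r_def using True pA pB by auto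
    have rA: "nonfin ts A \<Longrightarrow> r \<le> dmin ts A" unfolding r_def by auto
    have rB: "nonfin s' B \<Longrightarrow> r \<le> dmin s' B" unfolding r_def by auto
    have rr: "(nonfin ts A \<and> r = dmin ts A) \<or> (nonfin s' B \<and> r = dmin s' B)"
      unfolding r_def using True by auto
    obtain A2 mA FA' where a2: "mstep\<^sup>*\<^sup>* (cont ts A r) A2" "ready A2" "(step ts ^^ mA) A2 FA'"
      "moat_final V E c ts FA'" "stYA FA' = stYA FA" "mA \<le> nA" "nonfin ts A \<and> r = dmin ts A \<longrightarrow> mA < nA"
      using advance[OF less.prems(3) gA less.prems(5,6) r0 rA] by blast
    obtain B2 mB FB' where b2: "mstep\<^sup>*\<^sup>* (cont s' B r) B2" "ready B2" "(step s' ^^ mB) B2 FB'"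
      "moat_final V E c s' FB'" "stYA FB' = stYA FB" "mB \<le> nB" "nonfin s' B \<and> r = dmin s' B \<longrightarrow> mB < nB"
      using advance[OF less.prems(4) gB less.prems(7,8) r0 rB] by blast
    have lt: "mA + mB < N" using a2(6,7) b2(6,7) rr less.prems(1) by linarith
    have "inv (cont ts A r) (cont s' B r)"
      using pre_step[OF less.prems(2,3,4) r0 rA rB] .
    then have "inv A2 B2" using merge_phase a2(1) b2(1) b2(2) by blast
    then have "stYA FB' - stYA FA' \<le> tau"
      using less.IH[OF lt refl _ a2(2) b2(2) a2(3) a2(4) b2(3) b2(4)] by blast
    then show ?thesis using a2(5) b2(5) by simp
  qed
qed

lemma init_inv: "inv ({}, 0, \<lambda>_. 0, 0, 0) ({}, 0, \<lambda>_. 0, 0, 0)"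
proof -
  have "load V (\<lambda>_. 0) e = 0" for e by (simp add: load_def)
  then have g: "good ({}, 0, \<lambda>_. 0, 0, 0)" unfolding good_def using cpos by simp
  show ?thesis unfolding inv_def using g tau_nn by simp
qed

theorem result:
  assumes "moat_outcome V E c ts t pick yb ya" "moat_outcome V E c s' t pick yb' ya'"
  shows "ya' - ya \<le> tau"
proof -
  define Z :: "'a mstate" where "Z = ({}, 0, \<lambda>_. 0, 0, 0)"
  obtain FA where fa: "(step ts)\<^sup>*\<^sup>* Z FA" "moat_final V E c ts FA" "stYA FA = ya"
    using assms(1) unfolding moat_outcome_def Z_def by fastforce
  obtain FB where fb: "(step s')\<^sup>*\<^sup>* Z FB" "moat_final V E c s' FB" "stYA FB = ya'"
    using assms(2) unfolding moat_outcome_def Z_def by fastforce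
  obtain nA where nA: "(step ts ^^ nA) Z FA" using rtranclp_imp_relpowp[OF fa(1)] by blast
  obtain nB where nB: "(step s' ^^ nB) Z FB" using rtranclp_imp_relpowp[OF fb(1)] by blast
  obtain A2 mA where a2: "mstep\<^sup>*\<^sup>* Z A2" "ready A2" "(step ts ^^ mA) A2 FA"
    using chain_to_ready[OF nA fa(2)] by blast
  obtain B2 mB where b2: "mstep\<^sup>*\<^sup>* Z B2" "ready B2" "(step s' ^^ mB) B2 FB"
    using chain_to_ready[OF nB fb(2)] by blast
  have "inv A2 B2" using merge_phase[OF init_inv[folded Z_def] a2(1) b2(1) b2(2)] .
  then have "stYA FB - stYA FA \<le> tau" using main[OF refl _ a2(2) b2(2) a2(3) fa(2) b2(3) fb(2)] by blast
  then show ?thesis using fa(3) fb(3) by simp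
qed

end


theorem mainTheorem14:
  fixes V :: "'a set" and E :: "'a set set" and c :: "'a set \<Rightarrow> real"
    and t ts :: "'a \<Rightarrow> real" and pick :: "'a set set \<Rightarrow> 'a set"
    and q :: 'a and tau :: real and yb ya yb' ya' :: real
  assumes "finite V"
    and "\<forall>e\<in>E. e \<subseteq> V \<and> card e = 2"
    and "\<forall>e\<in>E. c e \<ge> 0"
    and "\<forall>v\<in>V. 0 \<le> t v \<and> t v \<le> ts v"
    and "\<forall>X. X \<noteq> {} \<and> X \<subseteq> E \<longrightarrow> pick X \<in> X"
    and "q \<in> V" and "ts q \<le> tau"
    and "moat_outcome V E c ts t pick yb ya"
    and "moat_outcome V E c (ts(q := tau)) t pick yb' ya'"
  shows "ya' - ya \<le> tau"
proof -
  interpret cmp V E c t pick ts q tau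
    using assms(1-7) by unfold_locales auto
  show ?thesis using result assms(8,9) by blast
qed

end
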